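(* Let $2\le f_1\le f_2\le\dots\le f_n$ be integers forming a Pinwheel instance whose density $D=\sum_{i=1}^n 1/f_i$ satisfies $D\le 1-3/\sqrt{f_1}$. Then the instance is feasible, i.e., there is an infinite sequence over $\{1,\dots,n\}$ in which, for every $i$, every block of $f_i$ consecutive entries contains at least one occurrence of $i$.
   Context: Pinwheel problem: given integer frequencies $2\le f_1\le\dots\le f_n$, a schedule is an infinite sequence of indices from $\{1,\dots,n\}$ such that for each $i$, any $f_i$ consecutive elements of the sequence include index $i$. The instance is feasible if a schedule exists. Its density is $\sum_i 1/f_i$. *)

theory Defs
  imports Complex_Main
begin

definition pinwheel_schedule :: "nat \<Rightarrow> (nat \<Rightarrow> nat) \<Rightarrow> (nat \<Rightarrow> nat) \<Rightarrow> bool" where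
  "pinwheel_schedule n f s \<longleftrightarrow>
     (\<forall>t. s t \<in> {1..n}) \<and>
     (\<forall>i\<in>{1..n}. \<forall>t. \<exists>k<f i. s (t + k) = i)"

definition pinwheel_feasible :: "nat \<Rightarrow> (nat \<Rightarrow> nat) \<Rightarrow> bool" where
  "pinwheel_feasible n f \<longleftrightarrow> (\<exists>s. pinwheel_schedule n f s)"

definition pinwheel_density :: "nat \<Rightarrow> (nat \<Rightarrow> nat) \<Rightarrow> real" where
  "pinwheel_density n f = (\<Sum>i=1..n. 1 / real (f i))"

end

theory Submission
  imports Defs
begin


definition covers :: "('a \<Rightarrow> nat) \<Rightarrow> 'a set \<Rightarrow> (nat \<Rightarrow> 'a) \<Rightarrow> bool" where
  "covers F T s \<longleftrightarrow> (\<forall>i\<in>T. \<forall>t. \<exists>k<F i. s (t+k) = i)"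

fun cnt :: "(nat \<Rightarrow> 'a) \<Rightarrow> 'a \<Rightarrow> nat \<Rightarrow> nat" where
  "cnt s u 0 = 0"
| "cnt s u (Suc t) = cnt s u t + (if s t = u then 1 else 0)"

definition rr :: "(nat \<Rightarrow> 'b) \<Rightarrow> ('b \<Rightarrow> 'a list) \<Rightarrow> nat \<Rightarrow> 'a" where
  "rr s g t = g (s t) ! (cnt s (s t) t mod length (g (s t)))"

lemma cnt_mono: "t \<le> t' \<Longrightarrow> cnt s u t \<le> cnt s u t'"
  by (induction t' rule: dec_induct) auto

lemma cnt_step:
  assumes "\<exists>k<H. s (t+k) = u"
  shows "cnt s u t + 1 \<le> cnt s u (t + H)"
proof -
  obtain k where k: "k < H" "s (t+k) = u" using assms by blast
  have "cnt s u t \<le> cnt s u (t+k)" by (rule cnt_mono) simp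
  moreover have "cnt s u (Suc (t+k)) = cnt s u (t+k) + 1" using k by simp
  moreover have "cnt s u (Suc (t+k)) \<le> cnt s u (t+H)" by (rule cnt_mono) (use k in simp)
  ultimately show ?thesis by simp
qed

lemma cnt_mult:
  assumes "\<forall>t. \<exists>k<H. s (t+k) = u"
  shows "cnt s u t + q \<le> cnt s u (t + q*H)"
proof (induction q)
  case 0 then show ?case by simp
next
  case (Suc q)
  have "cnt s u (t + q*H) + 1 \<le> cnt s u (t + q*H + H)" using assms by (intro cnt_step) blast
  moreover have "cnt s u (t + Suc q * H) = cnt s u (t + q*H + H)" by (simp add: algebra_simps)
  ultimately show ?case using Suc by linarith
qed

lemma cnt_hit:
  "t \<le> t2 \<Longrightarrow> cnt s u t \<le> v \<Longrightarrow> v < cnt s u t2 \<Longrightarrow> \<exists>x. t \<le> x \<and> x < t2 \<and> s x = u \<and> cnt s u x = v"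
proof (induction t2)
  case 0 then show ?case by simp
next
  case (Suc t2)
  show ?case
  proof (cases "t = Suc t2")
    case True then show ?thesis using Suc by simp
  next
    case False
    then have tt: "t \<le> t2" using Suc by simp
    show ?thesis
    proof (cases "v < cnt s u t2")
      case True
      from Suc.IH[OF tt Suc.prems(2) True] obtain x where "t \<le> x" "x < t2" "s x = u" "cnt s u x = v" by blast
      then show ?thesis by (intro exI[of _ x]) simp
    next
      case False
      then have "s t2 = u \<and> cnt s u t2 = v" using Suc.prems by (auto split: if_splits)
      then show ?thesis using tt by auto
    qed
  qed
qed

lemma mod_exists:
  fixes a L m :: nat
  assumes "0 < L" "m < L"
  shows "\<exists>v. a \<le> v \<and> v < a + L \<and> v mod L = m"
proof -
  have e: "L * (a div L) + a mod L = a" by simp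
  have r: "a mod L < L" using assms by simp
  show ?thesis
  proof (cases "a mod L \<le> m")
    case True
    have "(L * (a div L) + m) mod L = m" using assms by simp
    then show ?thesis using True e r assms by (intro exI[of _ "L * (a div L) + m"]) linarith
  next
    case False
    have "(m + L * (a div L + 1)) mod L = m" using assms by (simp only: mod_mult_self2 mod_less)
    then have "(L * (a div L + 1) + m) mod L = m" by (simp add: add.commute)
    moreover have "L * (a div L + 1) = L * (a div L) + L" by simp
    ultimately show ?thesis using False e r assms by (intro exI[of _ "L * (a div L + 1) + m"]) linarith
  qed
qed

lemma rr_cover:
  assumes cov: "\<forall>t. \<exists>k<H. s (t+k) = u"
    and i: "i \<in> set (g u)" and le: "length (g u) * H \<le> F"
  shows "\<exists>k<F. rr s g (t+k) = i"
proof -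
  define L where "L = length (g u)"
  have L0: "0 < L" using i L_def by (cases "g u") auto
  obtain m where m: "m < L" "g u ! m = i" using i L_def by (auto simp: in_set_conv_nth)
  obtain v where v: "cnt s u t \<le> v" "v < cnt s u t + L" "v mod L = m"
    using mod_exists[OF L0 m(1)] by blast
  have "cnt s u t + L \<le> cnt s u (t + L*H)" using cnt_mult[OF cov] by blast
  then obtain x where x: "t \<le> x" "x < t + L*H" "s x = u" "cnt s u x = v"
    using cnt_hit[of t "t + L*H" s u v] v by auto
  have "rr s g x = i" using x v m by (simp add: rr_def L_def)
  moreover have "x - t < F" using x le L_def by simp
  ultimately show ?thesis using x(1) by (intro exI[of _ "x - t"]) auto
qed



lemma covers_mono: "covers F T s \<Longrightarrow> (\<forall>i\<in>T. F i \<le> G i) \<Longrightarrow> covers G T s"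
  unfolding covers_def by (meson less_le_trans)

lemma pow2:
  fixes T :: "'a set" and J :: "'a \<Rightarrow> nat"
  assumes "finite T" "(\<Sum>u\<in>T. 1/2^(J u)::real) \<le> 1"
  shows "\<exists>s. covers (\<lambda>u. 2^(J u)) T s"
  using assms
proof (induction "sum J T" arbitrary: T J rule: less_induct)
  case less
  show ?case
  proof (cases "T = {}")
    case True then show ?thesis by (auto simp: covers_def)
  next
    case False
    define M where "M = Max (J ` T)"
    have "M \<in> J ` T" unfolding M_def using less.prems(1) False by (intro Max_in) auto
    then obtain a where a: "a \<in> T" "J a = M" by (metis imageE)
    have Jle: "\<forall>x\<in>T. J x \<le> M" using less.prems M_def by auto
    show ?thesis
    proof (cases "M = 0")
      case True
      then have J0: "\<forall>x\<in>T. J x = 0" using Jle by auto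
      then have "(\<Sum>u\<in>T. 1/2^(J u)::real) = real (card T)" by simp
      then have "card T \<le> Suc 0" using less.prems by simp
      then have "T = {a}" using a less.prems(1) card_le_Suc0_iff_eq by blast
      then show ?thesis using J0 a by (intro exI[of _ "\<lambda>_. a"]) (auto simp: covers_def)
    next
      case Mpos: False
      show ?thesis
      proof (cases "\<exists>b\<in>T. b \<noteq> a \<and> J b = M")
        case True
        then obtain b where b: "b\<in>T" "b\<noteq>a" "J b = M" by blast
        define T' where "T' = T - {b}"
        define J' where "J' = J(a := M - 1)"
        define R where "R = T' - {a}"
        have fin: "finite T'" using less.prems T'_def by simp
        have aT': "a \<in> T'" using a b T'_def by simp
        have finR: "finite R" using fin R_def by simp
        have JR: "sum J' R = sum J R" by (rule sum.cong) (auto simp: J'_def R_def)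
        have s1: "sum J T = J b + sum J T'" using sum.remove[OF less.prems(1) b(1)] T'_def by simp
        have s2: "sum J T' = J a + sum J R" using sum.remove[OF fin aT'] R_def by simp
        have s3: "sum J' T' = J' a + sum J' R" using sum.remove[OF fin aT'] R_def by simp
        have lt: "sum J' T' < sum J T" using s1 s2 s3 JR a b Mpos by (simp add: J'_def)
        have DR: "(\<Sum>u\<in>R. 1/2^(J' u)::real) = (\<Sum>u\<in>R. 1/2^(J u))"
          by (rule sum.cong) (auto simp: J'_def R_def)
        have d1: "(\<Sum>u\<in>T. 1/2^(J u)::real) = 1/2^(J b) + (\<Sum>u\<in>T'. 1/2^(J u))"
          using sum.remove[OF less.prems(1) b(1)] T'_def by simp
        have d2: "(\<Sum>u\<in>T'. 1/2^(J u)::real) = 1/2^(J a) + (\<Sum>u\<in>R. 1/2^(J u))"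
          using sum.remove[OF fin aT'] R_def by simp
        have d3: "(\<Sum>u\<in>T'. 1/2^(J' u)::real) = 1/2^(J' a) + (\<Sum>u\<in>R. 1/2^(J' u))"
          using sum.remove[OF fin aT'] R_def by simp
        have pw: "(2::real)^M = 2 * 2^(M-1)"
        proof -
          have "M = Suc (M-1)" using Mpos by simp
          then show ?thesis by (metis power_Suc)
        qed
        have "(\<Sum>u\<in>T'. 1/2^(J' u)::real) = (\<Sum>u\<in>T. 1/2^(J u))"
          using d1 d2 d3 DR a b pw by (simp add: J'_def)
        then obtain s' where s': "covers (\<lambda>u. 2^(J' u)) T' s'"
          using less.hyps[OF lt fin] less.prems by auto
        have pwn: "(2::nat)^M = 2 * 2^(M-1)"
        proof -
          have "M = Suc (M-1)" using Mpos by simp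
          then show ?thesis by (metis power_Suc)
        qed
        define g where "g = (\<lambda>x. if x = a then [a,b] else [x])"
        have "covers (\<lambda>u. 2^(J u)) T (rr s' g)"
          unfolding covers_def
        proof (intro ballI allI)
          fix i t assume iT: "i \<in> T"
          show "\<exists>k<2^(J i). rr s' g (t+k) = i"
          proof (cases "i = a \<or> i = b")
            case True
            have cov: "\<forall>t. \<exists>k<2^(J' a). s' (t+k) = a" using s' aT' by (auto simp: covers_def)
            have "length (g a) * 2^(J' a) \<le> 2^(J i)" using True a b pwn by (auto simp: g_def J'_def)
            moreover have "i \<in> set (g a)" using True by (auto simp: g_def)
            ultimately show ?thesis using rr_cover[OF cov, of i g] by blast
          next
            case False
            then have iT': "i \<in> T'" using iT T'_def by simp
            have cov: "\<forall>t. \<exists>k<2^(J' i). s' (t+k) = i" using s' iT' by (auto simp: covers_def)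
            have "length (g i) * 2^(J' i) \<le> 2^(J i)" using False by (auto simp: g_def J'_def)
            moreover have "i \<in> set (g i)" using False by (auto simp: g_def)
            ultimately show ?thesis using rr_cover[OF cov, of i g] by blast
          qed
        qed
        then show ?thesis by blast
      next
        case False
        define J' where "J' = J(a := M - 1)"
        define R where "R = T - {a}"
        define N where "N = M - 1"
        have finR: "finite R" using less.prems R_def by simp
        have JRle: "\<forall>x\<in>R. J x \<le> N"
        proof
          fix x assume "x \<in> R"
          then have "x \<in> T" "x \<noteq> a" by (auto simp: R_def)
          then have "J x \<le> M" "J x \<noteq> M" using Jle False by auto
          then show "J x \<le> N" unfolding N_def by linarith
        qed
        have JR: "sum J' R = sum J R" by (rule sum.cong) (auto simp: J'_def R_def)
        have s2: "sum J T = J a + sum J R" using sum.remove[OF less.prems(1) a(1)] R_def by simp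
        have s3: "sum J' T = J' a + sum J' R" using sum.remove[OF less.prems(1) a(1)] R_def by simp
        have lt: "sum J' T < sum J T" using s2 s3 JR a Mpos by (simp add: J'_def)
        have DR: "(\<Sum>u\<in>R. 1/2^(J' u)::real) = (\<Sum>u\<in>R. 1/2^(J u))"
          by (rule sum.cong) (auto simp: J'_def R_def)
        define \<sigma> where "\<sigma> = (\<Sum>x\<in>R. (2::nat)^(N - J x))"
        have trm: "1/2^(J x) = (2::real)^(N - J x) / 2^N" if "x \<in> R" for x
        proof -
          have "(2::real)^N = 2^(N - J x) * 2^(J x)" using JRle that
            by (metis le_add_diff_inverse2 power_add)
          then show ?thesis by simp
        qed
        have sig: "(\<Sum>u\<in>R. 1/2^(J u)::real) = real \<sigma> / 2^N"
          unfolding \<sigma>_def by (simp add: sum_divide_distrib trm)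
        have d1: "(\<Sum>u\<in>T. 1/2^(J u)::real) = 1/2^(J a) + (\<Sum>u\<in>R. 1/2^(J u))"
          using sum.remove[OF less.prems(1) a(1)] R_def by simp
        have d3: "(\<Sum>u\<in>T. 1/2^(J' u)::real) = 1/2^(J' a) + (\<Sum>u\<in>R. 1/2^(J' u))"
          using sum.remove[OF less.prems(1) a(1)] R_def by simp
        have pw: "(2::real)^M = 2 * 2^N"
        proof -
          have "M = Suc N" using Mpos N_def by simp
          then show ?thesis by (metis power_Suc)
        qed
        have "1/(2*2^N) + real \<sigma> / 2^N \<le> (1::real)" using less.prems d1 sig a pw by simp
        then have "1 + 2 * real \<sigma> \<le> 2 * 2^N" by (simp add: field_simps)
        then have "real (1 + 2 * \<sigma>) \<le> real (2 * 2^N)" by simp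
        then have "1 + 2 * \<sigma> \<le> 2 * 2^N" by (simp only: of_nat_le_iff)
        then have "\<sigma> + 1 \<le> 2^N" by linarith
        then have "real (\<sigma> + 1) \<le> real (2^N)" by (simp only: of_nat_le_iff)
        then have "real \<sigma> + 1 \<le> 2^N" by simp
        then have "1/2^N + real \<sigma> / 2^N \<le> (1::real)" by (simp add: field_simps)
        then have "(\<Sum>u\<in>T. 1/2^(J' u)::real) \<le> 1" using d3 DR sig by (simp add: J'_def N_def)
        then obtain s' where s': "covers (\<lambda>u. 2^(J' u)) T s'"
          using less.hyps[OF lt less.prems(1)] by auto
        have "\<forall>i\<in>T. (2::nat)^(J' i) \<le> 2^(J i)" using a by (auto simp: J'_def)
        then have "covers (\<lambda>u. 2^(J u)) T s'" using covers_mono[OF s'] by simp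
        then show ?thesis by blast
      qed
    qed
  qed
qed



function lev :: "nat \<Rightarrow> nat \<Rightarrow> nat" where
  "lev K v = (if K = 0 \<or> v < 2*K then 0 else Suc (lev K (v div 2)))"
  by auto
termination by (relation "measure snd") auto

declare lev.simps[simp del]

lemma lev_bounds: "1 \<le> K \<Longrightarrow> K \<le> v \<Longrightarrow> K * 2^lev K v \<le> v \<and> v < 2*K*2^lev K v"
proof (induction K v rule: lev.induct)
  case (1 K v)
  show ?case
  proof (cases "v < 2*K")
    case True then show ?thesis using 1(2,3) by (simp add: lev.simps)
  next
    case False
    have Kv: "K \<le> v div 2" using False by linarith
    have nz: "\<not> (K = 0 \<or> v < 2*K)" using False 1(2) by simp
    have IH: "K * 2^lev K (v div 2) \<le> v div 2 \<and> v div 2 < 2*K*2^lev K (v div 2)"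
      using 1(1)[OF nz 1(2) Kv] .
    have L: "lev K v = Suc (lev K (v div 2))" using nz by (simp add: lev.simps)
    define l where "l = lev K (v div 2)"
    define A where "A = K * 2^l"
    have IH': "A \<le> v div 2" "v div 2 < 2 * A" using IH unfolding A_def l_def by (auto simp: mult.assoc)
    have a: "K * 2^Suc l = 2 * A" by (simp add: A_def)
    have b: "2 * (v div 2) \<le> v" by simp
    have c: "v \<le> 2 * (v div 2) + 1" by simp
    have d: "2*K*2^Suc l = 4 * A" by (simp add: A_def)
    have "K * 2^Suc l \<le> v" using a b IH' by linarith
    moreover have "v < 2*K*2^Suc l" using d c IH' by linarith
    ultimately show ?thesis unfolding L l_def by blast
  qed
qed

definition cK :: "nat \<Rightarrow> (nat \<Rightarrow> nat) \<Rightarrow> nat \<Rightarrow> nat" where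
  "cK K f a = f a div 2^lev K (f a)"

fun grp :: "nat \<Rightarrow> (nat \<Rightarrow> nat) \<Rightarrow> nat list \<Rightarrow> (nat \<times> nat list) list" where
  "grp K f [] = []"
| "grp K f (a # xs) = (lev K (f a), a # take (cK K f a - 1) xs) # grp K f (drop (cK K f a - 1) xs)"

lemma grp_concat: "concat (map snd (grp K f xs)) = xs"
  by (induction K f xs rule: grp.induct) auto

lemma cK_facts:
  assumes "1 \<le> K" "K \<le> f a"
  shows "K \<le> cK K f a" "cK K f a * 2^lev K (f a) \<le> f a"
    "f a < (cK K f a + 1) * 2^lev K (f a)" "f a < 2*K*2^lev K (f a)"
proof -
  have lb: "K * 2^lev K (f a) \<le> f a \<and> f a < 2*K*2^lev K (f a)" using lev_bounds assms by blast
  show "K \<le> cK K f a" unfolding cK_def using lb by (simp add: less_eq_div_iff_mult_less_eq)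
  show "cK K f a * 2^lev K (f a) \<le> f a" unfolding cK_def by simp
  show "f a < (cK K f a + 1) * 2^lev K (f a)" unfolding cK_def
    using dividend_less_div_times[of "2^lev K (f a)" "f a"] by (simp add: algebra_simps)
  show "f a < 2*K*2^lev K (f a)" using lb by simp
qed

lemma sorted_map_drop: "sorted (map f xs) \<Longrightarrow> sorted (map f (drop n xs))"
  by (simp add: drop_map[symmetric] sorted_wrt_drop)

lemma grp_len:
  assumes "1 \<le> K" "\<forall>x\<in>set xs. K \<le> f x" "sorted (map f xs)"
    "p \<in> set (grp K f xs)" "i \<in> set (snd p)"
  shows "length (snd p) * 2^(fst p) \<le> f i"
  using assms
proof (induction K f xs rule: grp.induct)
  case (1 K f) then show ?case by simp
next
  case (2 K f a xs)
  define c where "c = cK K f a"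
  have cf: "K \<le> c" "c * 2^lev K (f a) \<le> f a" using cK_facts[of K f a] 2(2,3) c_def by auto
  show ?case
  proof (cases "p = (lev K (f a), a # take (c - 1) xs)")
    case True
    have len: "length (snd p) \<le> c" using True cf 2(2) by auto
    have "f a \<le> f i"
    proof -
      have "i = a \<or> i \<in> set xs" using True 2(6) by (auto dest: in_set_takeD)
      then show ?thesis using 2(4) by auto
    qed
    then have "c * 2^fst p \<le> f i" using True cf by simp
    then show ?thesis using len by (meson le_trans mult_le_mono1)
  next
    case False
    then have p: "p \<in> set (grp K f (drop (c - 1) xs))" using 2(5) c_def by simp
    have p': "p \<in> set (grp K f (drop (cK K f a - 1) xs))" using p c_def by simp
    have h1: "\<forall>x\<in>set (drop (cK K f a - 1) xs). K \<le> f x" using 2(3) by (auto dest: in_set_dropD)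
    have h2: "sorted (map f (drop (cK K f a - 1) xs))" using 2(4) sorted_map_drop[of f xs] by simp
    show ?thesis using 2(1)[OF 2(2) h1 h2 p' 2(6)] .
  qed
qed

lemma sum_list_lb: "(\<forall>y\<in>set ys. b \<le> h y) \<Longrightarrow> real (length ys) * b \<le> sum_list (map h ys)"
  for b :: real
  by (induction ys) (auto simp: algebra_simps)

lemma key_ineq:
  fixes F F' P c K Dg :: real
  assumes "1 \<le> K" "K \<le> c" "0 < F" "F \<le> F'" "0 < P" "F < (c+1)*P" "F < 2*K*P" "c/F' \<le> Dg"
  shows "1/P + 2*K/F' \<le> (1+1/K)*Dg + 2*K/F"
proof -
  have F'p: "0 < F'" using assms by linarith
  have "(1+1/K)*(c/F') \<le> (1+1/K)*Dg" using assms by (intro mult_left_mono) auto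
  moreover have "(c+1)/F' \<le> (1+1/K)*(c/F')"
  proof -
    have "1 \<le> c/K" using assms by simp
    then have "c + 1 \<le> c + c/K" by simp
    also have "\<dots> = (1+1/K)*c" by (simp add: algebra_simps)
    finally show ?thesis using F'p by (simp add: divide_right_mono)
  qed
  moreover have "1/P + 2*K/F' \<le> (c+1)/F' + 2*K/F"
  proof -
    define x where "x = F / P"
    have x1: "x < c + 1" using assms unfolding x_def by (simp add: pos_divide_less_eq)
    have x2: "x < 2*K" using assms unfolding x_def by (simp add: pos_divide_less_eq)
    have P: "1/P = x/F" using assms unfolding x_def by simp
    have "0 \<le> (c+1-x)*F + (2*K - x)*(F'-F)" using x1 x2 assms by (intro add_nonneg_nonneg mult_nonneg_nonneg) auto
    then have "x*F' + 2*K*F \<le> (c+1)*F + 2*K*F'" by (simp add: algebra_simps)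
    then have "(x*F' + 2*K*F)/(F*F') \<le> ((c+1)*F + 2*K*F')/(F*F')"
      using assms F'p by (intro divide_right_mono) auto
    then show ?thesis unfolding P using assms F'p by (simp add: add_divide_distrib)
  qed
  ultimately show ?thesis by linarith
qed



lemma grp_density:
  assumes "1 \<le> K" "\<forall>x\<in>set xs. K \<le> f x" "sorted (map f xs)" "xs \<noteq> []"
  shows "sum_list (map (\<lambda>p. 1/2^(fst p)) (grp K f xs)) \<le>
     (1 + 1/real K) * sum_list (map (\<lambda>i. 1/real (f i)) xs) + 2*real K / real (f (hd xs))"
  using assms
proof (induction K f xs rule: grp.induct)
  case (1 K f) then show ?case by simp
next
  case (2 K f a xs)
  define c where "c = cK K f a"
  define j where "j = lev K (f a)"
  define ys where "ys = drop (c - 1) xs"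
  define g where "g = a # take (c - 1) xs"
  have Ka: "K \<le> f a" using 2(3) by simp
  have cf: "K \<le> c" "c * 2^j \<le> f a" "f a < (c + 1) * 2^j" "f a < 2*K*2^j"
    using cK_facts[of K f a, OF 2(2) Ka] c_def j_def by auto
  have spl: "a # xs = g @ ys" by (simp add: g_def ys_def)
  have grpeq: "grp K f (a#xs) = (j, g) # grp K f ys" by (simp add: c_def j_def g_def ys_def)
  define Dg where "Dg = sum_list (map (\<lambda>i. 1/real (f i)) g)"
  define Dy where "Dy = sum_list (map (\<lambda>i. 1/real (f i)) ys)"
  have Dsplit: "sum_list (map (\<lambda>i. 1/real (f i)) (a#xs)) = Dg + Dy"
    unfolding Dg_def Dy_def spl by simp
  have Dg0: "0 \<le> Dg" unfolding Dg_def by (intro sum_list_nonneg) auto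
  have Dy0: "0 \<le> Dy" unfolding Dy_def by (intro sum_list_nonneg) auto
  have K1: "(1::real) \<le> real K" using 2(2) by simp
  have Fpos: "0 < real (f a)" using Ka 2(2) by simp
  have "real (f a) < real (2*K*2^j)" using cf(4) by (simp only: of_nat_less_iff)
  then have cfr: "real (f a) < 2 * real K * 2^j" by simp
  have "real (f a) < real ((c + 1) * 2^j)" using cf(3) by (simp only: of_nat_less_iff)
  then have cfr2: "real (f a) < (real c + 1) * 2^j" by (simp add: distrib_right)
  show ?case
  proof (cases "ys = []")
    case True
    have "1/(2::real)^j \<le> 2 * real K / real (f a)"
      using cfr Fpos by (simp add: divide_simps mult.commute)
    moreover have "0 \<le> (1 + 1/real K) * (Dg + Dy)" using Dg0 Dy0 by simp
    ultimately show ?thesis unfolding grpeq Dsplit using True by simp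
  next
    case False
    have h1: "\<forall>x\<in>set ys. K \<le> f x" using 2(3) unfolding ys_def by (auto dest: in_set_dropD)
    have h2: "sorted (map f ys)" using 2(4) sorted_map_drop[of f xs] unfolding ys_def by simp
    have IH: "sum_list (map (\<lambda>p. 1/2^(fst p)) (grp K f ys)) \<le> (1 + 1/real K) * Dy + 2*real K / real (f (hd ys))"
      using 2(1)[OF 2(2) _ _ _] h1 h2 False unfolding ys_def c_def Dy_def by simp
    have srt: "sorted (map f g @ map f ys)" using 2(4) spl by (metis map_append)
    have hdy: "hd ys \<in> set ys" using False by simp
    have gle: "\<forall>i\<in>set g. f i \<le> f (hd ys)" using srt hdy by (auto simp: sorted_append)
    have "c - 1 < length xs" using False unfolding ys_def by simp
    then have lg: "length g = c" using cf(1) 2(2) unfolding g_def by simp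
    have "real (length g) * (1 / real (f (hd ys))) \<le> Dg" unfolding Dg_def
    proof (rule sum_list_lb, rule ballI)
      fix i assume "i \<in> set g"
      then have "f i \<le> f (hd ys)" "K \<le> f i" using gle 2(3) spl by auto
      then show "1 / real (f (hd ys)) \<le> 1 / real (f i)" using 2(2)
        by (intro divide_left_mono) auto
    qed
    then have cD: "real c / real (f (hd ys)) \<le> Dg" using lg by simp
    have FF: "real (f a) \<le> real (f (hd ys))" using gle g_def by simp
    have key: "1/2^j + 2*real K / real (f (hd ys)) \<le> (1 + 1/real K)*Dg + 2*real K / real (f a)"
      using key_ineq[of "real K" "real c" "real (f a)" "real (f (hd ys))" "2^j" Dg] K1 cf(1) Fpos FF cfr2 cfr cD
      by simp
    have dd: "(1+1/real K)*(Dg+Dy) = (1+1/real K)*Dg + (1+1/real K)*Dy" by (simp only: distrib_left)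
    have "sum_list (map (\<lambda>p. 1/2^(fst p)) (grp K f (a#xs))) = 1/2^j + sum_list (map (\<lambda>p. 1/(2::real)^(fst p)) (grp K f ys))"
      unfolding grpeq by simp
    then show ?thesis unfolding Dsplit list.sel(1) using IH key dd by linarith
  qed
qed



lemma sorted_map_upt:
  assumes "\<And>i j. a \<le> i \<Longrightarrow> i \<le> j \<Longrightarrow> j < b \<Longrightarrow> f i \<le> (f j :: nat)"
  shows "sorted (map f [a..<b])"
  using assms
proof (induction b)
  case 0 then show ?case by simp
next
  case (Suc b)
  have IH: "sorted (map f [a..<b])" using Suc by simp
  show ?case
  proof (cases "a \<le> b")
    case True
    have "\<forall>x\<in>set [a..<b]. f x \<le> f b" using Suc.prems by auto
    then show ?thesis using IH True by (auto simp: sorted_append)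
  next
    case False then show ?thesis by simp
  qed
qed

lemma final_ineq:
  fixes s k D :: real
  assumes "1 \<le> k" "k \<le> s" "s < k + 1" "0 \<le> D" "D \<le> 1 - 3/s"
  shows "(1 + 1/k) * D + 2*k/(s*s) \<le> 1"
proof -
  have s0: "0 < s" using assms by linarith
  have D1: "D \<le> 1" using assms s0 by (smt (verit) divide_nonneg_pos)
  have a: "(1 + 1/k) * D \<le> D + 1/k"
  proof -
    have "D/k \<le> 1/k" using D1 assms by (intro divide_right_mono) auto
    then show ?thesis by (simp add: distrib_right)
  qed
  have "0 \<le> (s - k) * (2*k - s)" using assms by (intro mult_nonneg_nonneg) auto
  then have num: "s*s + 2*k*k - 3*s*k \<le> 0" by (simp add: algebra_simps)
  have eq: "1/k + 2*k/(s*s) - 3/s = (s*s + 2*k*k - 3*s*k)/(k*s*s)"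
    using s0 assms by (simp add: field_simps)
  have "(s*s + 2*k*k - 3*s*k)/(k*s*s) \<le> 0"
    using num s0 assms by (intro divide_nonpos_pos) auto
  then have b: "1/k + 2*k/(s*s) \<le> 3/s" using eq by linarith
  show ?thesis using a b assms(5) by linarith
qed

theorem mainTheorem2:
  fixes n :: nat and f :: "nat \<Rightarrow> nat"
  assumes "n \<ge> 1"
    and "\<And>i. i \<in> {1..n} \<Longrightarrow> 2 \<le> f i"
    and "\<And>i j. i \<in> {1..n} \<Longrightarrow> j \<in> {1..n} \<Longrightarrow> i \<le> j \<Longrightarrow> f i \<le> f j"
    and "pinwheel_density n f \<le> 1 - 3 / sqrt (real (f 1))"
  shows "pinwheel_feasible n f"
proof -
  define s where "s = sqrt (real (f 1))"
  define K where "K = nat \<lfloor>s\<rfloor>"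
  have f1: "2 \<le> f 1" using assms(1,2) by simp
  have s1: "1 \<le> s" unfolding s_def using f1 by simp
  have fl: "real_of_int \<lfloor>s\<rfloor> \<le> s" "s < real_of_int \<lfloor>s\<rfloor> + 1" by linarith+
  have fl1: "1 \<le> \<lfloor>s\<rfloor>" using s1 by linarith
  have Kr: "real K = real_of_int \<lfloor>s\<rfloor>" unfolding K_def using fl1 by simp
  have K1: "1 \<le> K" unfolding K_def using fl1 by linarith
  have Ks: "real K \<le> s" "s < real K + 1" using fl Kr by auto
  have ss: "s * s = real (f 1)" unfolding s_def by simp
  have "s * 1 \<le> s * s" using s1 by (intro mult_left_mono) auto
  then have "real K \<le> real (f 1)" using Ks s1 ss by linarith
  then have Kf: "K \<le> f 1" by simp
  define xs where "xs = [1..<Suc n]"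
  have setxs: "set xs = {1..n}" unfolding xs_def by auto
  have fK: "\<forall>x\<in>set xs. K \<le> f x"
  proof
    fix x assume "x \<in> set xs"
    then have "x \<in> {1..n}" using setxs by simp
    then have "f 1 \<le> f x" using assms(3)[of 1 x] assms(1) by auto
    then show "K \<le> f x" using Kf by simp
  qed
  have srt: "sorted (map f xs)" unfolding xs_def
    by (rule sorted_map_upt) (use assms(3) in auto)
  have ne: "xs \<noteq> []" using assms(1) unfolding xs_def by simp
  have hd: "hd xs = 1" using assms(1) unfolding xs_def by (simp add: upt_rec)
  define D where "D = pinwheel_density n f"
  have Dl: "sum_list (map (\<lambda>i. 1/real (f i)) xs) = D"
  proof -
    have "sum_list (map (\<lambda>i. 1/real (f i)) xs) = (\<Sum>i\<in>set xs. 1/real (f i))"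
      unfolding xs_def by (rule sum_set_upt_conv_sum_list_nat[symmetric])
    then show ?thesis unfolding D_def pinwheel_density_def setxs by simp
  qed
  have D0: "0 \<le> D" unfolding D_def pinwheel_density_def by (intro sum_nonneg) auto
  define G where "G = grp K f xs"
  have "sum_list (map (\<lambda>p. 1/2^(fst p)) G) \<le> (1 + 1/real K) * D + 2*real K / real (f 1)"
    using grp_density[OF K1 fK srt ne] Dl hd unfolding G_def by simp
  also have "\<dots> \<le> 1"
    using final_ineq[of "real K" s D] K1 Ks D0 assms(4) ss unfolding D_def s_def by simp
  finally have dens: "sum_list (map (\<lambda>p. 1/(2::real)^(fst p)) G) \<le> 1" .
  define U where "U = {0..<length G}"
  define J where "J = (\<lambda>u. fst (G!u))"
  have "(\<Sum>u\<in>U. 1/(2::real)^(J u)) = sum_list (map (\<lambda>p. 1/(2::real)^(fst p)) G)"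
    unfolding U_def J_def by (simp add: sum_list_sum_nth)
  then obtain s0 where s0: "covers (\<lambda>u. 2^(J u)) U s0"
    using pow2[of U J] dens unfolding U_def by auto
  define s1 where "s1 = rr s0 (\<lambda>u. snd (G!u))"
  define s2 where "s2 = (\<lambda>t. if s1 t \<in> {1..n} then s1 t else 1)"
  have "pinwheel_schedule n f s2"
    unfolding pinwheel_schedule_def
  proof (intro conjI ballI allI)
    fix t show "s2 t \<in> {1..n}" unfolding s2_def using assms(1) by auto
  next
    fix i t assume i: "i \<in> {1..n}"
    then have "i \<in> set (concat (map snd G))" using grp_concat[of K f xs] setxs unfolding G_def by simp
    then obtain p where p: "p \<in> set G" "i \<in> set (snd p)" by auto
    then obtain u where u: "u < length G" "G ! u = p" by (auto simp: in_set_conv_nth)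
    have cov: "\<forall>t. \<exists>k<2^(J u). s0 (t+k) = u" using s0 u unfolding covers_def U_def by auto
    have le: "length (snd (G!u)) * 2^(J u) \<le> f i"
      using grp_len[OF K1 fK srt, of p i] p u unfolding G_def J_def by simp
    obtain k where k: "k < f i" "s1 (t+k) = i"
      using rr_cover[OF cov, of i "\<lambda>u. snd (G!u)" "f i" t] p u le unfolding s1_def by auto
    then have "s2 (t+k) = i" using i unfolding s2_def by simp
    then show "\<exists>k<f i. s2 (t+k) = i" using k by blast
  qed
  then show ?thesis unfolding pinwheel_feasible_def by blast
qed

end
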